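(* Fix $0<\delta<1$, and let $\epsilon=\frac12+\frac\delta2$, $\epsilon'=\frac12$, $c=\frac{4}{\epsilon-\epsilon'}=\frac{8}{\delta}$. For every even $n$, let $\mathcal M_n\subseteq\mathcal G_n$ be any subset with $|\mathcal M_n|\le 2^{\sqrt n}$ (and $\mathcal M_n=\emptyset$ for odd $n$). Then the hereditary closure of $\bigcup_{n\in\mathbb N}\mathcal M_n$ has at most factorial speed of growth, i.e. it contains at most $2^{O(n\log n)}$ graphs on vertex set $[n]$.
   Context: For even $n$, a good graph on $n$ vertices is a bipartite graph with vertex set $[n]$ and parts $\{1,\dots,\frac n2\}$ and $\{\frac n2+1,\dots,n\}$, having exactly $\lfloor(\frac n2)^{2-\epsilon}\rfloor$ edges, such that every induced subgraph with at most $(\frac n2)^{\epsilon'}$ vertices has a vertex of degree less than $c$ (within that subgraph). $\mathcal G_n$ denotes the set of good graphs on $n$ vertices (with $\epsilon,\epsilon',c$ as in the claim). The hereditary closure of a family $\mathcal M$ is the set of all graphs (on vertex sets $[k]$) isomorphic to an induced subgraph of some graph in $\mathcal M$. A family has at most factorial speed if the number of its members with vertex set $[n]$ is $2^{O(n\log n)}$. *)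

theory Defs
  imports Complex_Main
begin

text \<open>A (simple) graph with vertex set [n] = {1..n} is represented by its edge set,
  a set of 2-element subsets of {1..n}. A labelled graph in a family is a pair (n, E).\<close>

definition is_graph_on :: "nat \<Rightarrow> nat set set \<Rightarrow> bool" where
  "is_graph_on n E \<longleftrightarrow>
     E \<subseteq> {{u, v} | u v. u \<in> {1..n} \<and> v \<in> {1..n} \<and> u \<noteq> v}"

definition good_graph :: "real \<Rightarrow> real \<Rightarrow> real \<Rightarrow> nat \<Rightarrow> nat set set \<Rightarrow> bool" where
  "good_graph eps eps' c n E \<longleftrightarrow>
     even n \<and> is_graph_on n E \<and>
     (\<forall>e\<in>E. \<exists>u v. e = {u, v} \<and> u \<in> {1..n div 2} \<and> v \<in> {n div 2 + 1..n}) \<and>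
     card E = nat \<lfloor>(real n / 2) powr (2 - eps)\<rfloor> \<and>
     (\<forall>S \<subseteq> {1..n}. S \<noteq> {} \<and> real (card S) \<le> (real n / 2) powr eps' \<longrightarrow>
        (\<exists>v\<in>S. real (card {u\<in>S. {u, v} \<in> E}) < c))"

definition good_graphs :: "real \<Rightarrow> real \<Rightarrow> real \<Rightarrow> nat \<Rightarrow> nat set set set" where
  "good_graphs eps eps' c n = {E. good_graph eps eps' c n E}"

definition hereditary_closure :: "(nat \<times> nat set set) set \<Rightarrow> (nat \<times> nat set set) set" where
  "hereditary_closure M =
     {(k, F). is_graph_on k F \<and>
        (\<exists>(n, E)\<in>M. \<exists>f. inj_on f {1..k} \<and> f ` {1..k} \<subseteq> {1..n} \<and>
           (\<forall>u\<in>{1..k}. \<forall>v\<in>{1..k}. u \<noteq> v \<longrightarrow> ({f u, f v} \<in> E \<longleftrightarrow> {u, v} \<in> F)))}"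

definition at_most_factorial_speed :: "(nat \<times> nat set set) set \<Rightarrow> bool" where
  "at_most_factorial_speed H \<longleftrightarrow>
     (\<exists>C N. \<forall>n\<ge>N. real (card {F. (n, F) \<in> H}) \<le> 2 powr (C * real n * log 2 (real n)))"

end

theory Submission
  imports Defs "HOL-Library.FuncSet"
begin

definition edges_on :: "nat set \<Rightarrow> nat set set" where
  "edges_on S = {{u,v}|u v. u\<in>S \<and> v\<in>S \<and> u\<noteq>v}"

definition dgr :: "nat \<Rightarrow> nat set \<Rightarrow> nat set set set" where
  "dgr d S = {F. F \<subseteq> edges_on S \<and> (\<forall>T\<subseteq>S. T\<noteq>{} \<longrightarrow> (\<exists>v\<in>T. card {u\<in>T. {u,v}\<in>F} \<le> d))}"

lemma small_subsets_card:
  assumes "finite X"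
  shows "card {N. N \<subseteq> X \<and> card N \<le> d} \<le> (d+1)*(card X+1)^d"
proof -
  have eq: "{N. N \<subseteq> X \<and> card N \<le> d} = (\<Union>j\<in>{..d}. {N. N \<subseteq> X \<and> card N = j})" by auto
  have "card {N. N \<subseteq> X \<and> card N \<le> d} \<le> (\<Sum>j\<in>{..d}. card {N. N \<subseteq> X \<and> card N = j})"
    unfolding eq by (rule card_UN_le) simp
  also have "\<dots> = (\<Sum>j\<in>{..d}. card X choose j)" using n_subsets[OF assms] by simp
  also have "\<dots> \<le> (\<Sum>j\<in>{..d}. (card X+1)^d)"
  proof (rule sum_mono)
    fix j assume "j \<in> {..d}"
    hence jd: "j \<le> d" by simp
    have "card X choose j \<le> (card X + 1) choose j" by (rule binomial_right_mono) simp
    also have "\<dots> \<le> (card X+1)^j" 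
      by (cases "j \<le> card X + 1") (auto intro: binomial_le_pow simp: binomial_eq_0)
    also have "\<dots> \<le> (card X+1)^d" using jd by (simp add: power_increasing)
    finally show "card X choose j \<le> (card X+1)^d" .
  qed
  also have "\<dots> = (d+1)*(card X+1)^d" by simp
  finally show ?thesis .
qed

lemma edges_on_Pow: "edges_on S \<subseteq> Pow S" unfolding edges_on_def by auto

lemma finite_dgr: "finite S \<Longrightarrow> finite (dgr d S)"
  by (rule finite_subset[of _ "Pow (Pow S)"]) (use edges_on_Pow in \<open>auto simp: dgr_def\<close>)

lemma dgr_decomp:
  assumes "F \<in> dgr d S" "S \<noteq> {}" and finS: "finite S"
  obtains v N F' where "v\<in>S" "N \<subseteq> S - {v}" "card N \<le> d" "F' \<in> dgr d (S-{v})" "F = F' \<union> (\<lambda>u. {u,v}) ` N"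
proof -
  from assms obtain v where v: "v\<in>S" "card {u\<in>S. {u,v}\<in>F} \<le> d" 
    unfolding dgr_def by auto
  have Fe: "F \<subseteq> edges_on S" using assms(1) by (simp add: dgr_def)
  define N where "N = {u\<in>S. {u,v}\<in>F}"
  define F' where "F' = {e\<in>F. v \<notin> e}"
  have sing: "\<And>x. {x} \<notin> F" using Fe unfolding edges_on_def by (auto simp: doubleton_eq_iff)
  have NS: "N \<subseteq> S - {v}" using sing unfolding N_def by auto
  have F'd: "F' \<in> dgr d (S-{v})"
    unfolding dgr_def
  proof (intro CollectI conjI allI impI)
    show "F' \<subseteq> edges_on (S - {v})" using Fe unfolding F'_def edges_on_def by blast
    fix T assume T: "T \<subseteq> S - {v}" "T \<noteq> {}"
    have TS: "T \<subseteq> S" using T by blast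
    have all: "\<forall>T\<subseteq>S. T\<noteq>{} \<longrightarrow> (\<exists>v\<in>T. card {u\<in>T. {u,v}\<in>F} \<le> d)"
      using assms(1) unfolding dgr_def by blast
    obtain w where w: "w\<in>T" "card {u\<in>T. {u,w}\<in>F} \<le> d" using all TS T(2) by blast
    have "card {u\<in>T. {u,w}\<in>F'} \<le> card {u\<in>T. {u,w}\<in>F}"
      proof (rule card_mono)
      show "finite {u\<in>T. {u,w}\<in>F}" using finite_subset[OF TS finS] by simp
    qed (auto simp: F'_def)
    then have "card {u\<in>T. {u,w}\<in>F'} \<le> d" using w(2) by linarith
    then show "\<exists>w\<in>T. card {u\<in>T. {u,w}\<in>F'} \<le> d" using w(1) by blast
  qed
  have Feq: "F = F' \<union> (\<lambda>u. {u,v}) ` N"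
  proof
    show "F \<subseteq> F' \<union> (\<lambda>u. {u,v}) ` N"
    proof
      fix e assume e: "e \<in> F"
      then obtain a b where ab: "e = {a,b}" "a\<in>S" "b\<in>S" "a\<noteq>b" using Fe unfolding edges_on_def by blast
      show "e \<in> F' \<union> (\<lambda>u. {u,v}) ` N"
      proof (cases "v \<in> e")
        case False then show ?thesis using e by (simp add: F'_def)
      next
        case True
        then have "e = {a,v} \<or> e = {b,v}" using ab by auto
        then show ?thesis
        proof
          assume h: "e = {a,v}"
          then have "a \<in> N" using e ab(2) unfolding N_def by simp
          then have "e \<in> (\<lambda>u. {u,v}) ` N" using h by blast
          then show ?thesis by blast
        next
          assume h: "e = {b,v}"
          then have "b \<in> N" using e ab(3) unfolding N_def by simp
          then have "e \<in> (\<lambda>u. {u,v}) ` N" using h by blast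
          then show ?thesis by blast
        qed
      qed
    qed
    show "F' \<union> (\<lambda>u. {u,v}) ` N \<subseteq> F" unfolding F'_def N_def by auto
  qed
  have cN: "card N \<le> d" using v(2) unfolding N_def .
  show ?thesis
    by (rule that[OF v(1) NS cN F'd Feq])
qed

lemma dgr_card:
  assumes "finite S"
  shows "card (dgr d S) \<le> (card S * (d+1) * card S ^ d) ^ card S"
  using assms
proof (induction S rule: finite_remove_induct)
  case empty
  have "dgr d {} \<subseteq> {{}}" unfolding dgr_def edges_on_def by auto
  then have "card (dgr d {}) \<le> card {{}::nat set set}" by (intro card_mono) auto
  then show ?case by simp
next
  case (remove S)
  define s where "s = card S"
  have s1: "s \<ge> 1" using remove by (simp add: s_def Suc_le_eq card_gt_0_iff)
  define Q where "Q = (s * (d+1) * s ^ d)"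
  define NS where "NS = (\<lambda>v. {N. N \<subseteq> S - {v} \<and> card N \<le> d})"
  have sub: "dgr d S \<subseteq> (\<Union>v\<in>S. \<Union>N\<in>NS v. (\<lambda>F'. F' \<union> (\<lambda>u. {u,v}) ` N) ` dgr d (S-{v}))"
  proof
    fix F assume "F \<in> dgr d S"
    then obtain v N F' where h: "v\<in>S" "N \<subseteq> S - {v}" "card N \<le> d" "F' \<in> dgr d (S-{v})" "F = F' \<union> (\<lambda>u. {u,v}) ` N"
      by (rule dgr_decomp[OF _ remove(2) remove(1)])
    have "N \<in> NS v" using h(2,3) by (simp add: NS_def)
    then show "F \<in> (\<Union>v\<in>S. \<Union>N\<in>NS v. (\<lambda>F'. F' \<union> (\<lambda>u. {u,v}) ` N) ` dgr d (S-{v}))"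
      by (intro UN_I[OF h(1)] UN_I[of N] image_eqI[where f="\<lambda>F'. F' \<union> (\<lambda>u. {u,v}) ` N", OF h(5) h(4)])
  qed
  have fin: "finite (\<Union>v\<in>S. \<Union>N\<in>NS v. (\<lambda>F'. F' \<union> (\<lambda>u. {u,v}) ` N) ` dgr d (S-{v}))"
    using remove(1) by (auto simp: NS_def intro!: finite_dgr)
  have cv: "\<And>v. v \<in> S \<Longrightarrow> card (S - {v}) = s - 1" using remove(1) by (simp add: s_def)
  have "card (dgr d S) \<le> card (\<Union>v\<in>S. \<Union>N\<in>NS v. (\<lambda>F'. F' \<union> (\<lambda>u. {u,v}) ` N) ` dgr d (S-{v}))"
    by (rule card_mono[OF fin sub])
  also have "\<dots> \<le> (\<Sum>v\<in>S. card (\<Union>N\<in>NS v. (\<lambda>F'. F' \<union> (\<lambda>u. {u,v}) ` N) ` dgr d (S-{v})))"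
    by (rule card_UN_le[OF remove(1)])
  also have "\<dots> \<le> (\<Sum>v\<in>S. ((d+1) * s^d) * Q ^ (s - 1))"
  proof (rule sum_mono)
    fix v assume v: "v \<in> S"
    have fNS: "finite (NS v)" using remove(1) by (simp add: NS_def)
    have "card (\<Union>N\<in>NS v. (\<lambda>F'. F' \<union> (\<lambda>u. {u,v}) ` N) ` dgr d (S-{v}))
        \<le> (\<Sum>N\<in>NS v. card ((\<lambda>F'. F' \<union> (\<lambda>u. {u,v}) ` N) ` dgr d (S-{v})))"
      by (rule card_UN_le[OF fNS])
    also have "\<dots> \<le> (\<Sum>N\<in>NS v. card (dgr d (S-{v})))"
      by (rule sum_mono) (rule card_image_le, use remove(1) in \<open>simp add: finite_dgr\<close>)
    also have "\<dots> = card (NS v) * card (dgr d (S-{v}))" by simp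
    also have "\<dots> \<le> ((d+1) * s^d) * Q ^ (s - 1)"
    proof (rule mult_mono)
      show "card (NS v) \<le> (d+1) * s^d"
        using small_subsets_card[of "S - {v}" d] remove(1) cv[OF v] s1 unfolding NS_def by simp
      have "card (dgr d (S-{v})) \<le> ((s-1) * (d+1) * (s-1) ^ d) ^ (s-1)"
        using remove(4)[OF v] cv[OF v] by simp
      also have "\<dots> \<le> Q ^ (s-1)" unfolding Q_def
        by (intro power_mono mult_mono) auto
      finally show "card (dgr d (S-{v})) \<le> Q ^ (s-1)" .
    qed auto
    finally show "card (\<Union>N\<in>NS v. (\<lambda>F'. F' \<union> (\<lambda>u. {u,v}) ` N) ` dgr d (S-{v})) \<le> ((d+1) * s^d) * Q ^ (s - 1)" .
  qed
  also have "\<dots> = s * (((d+1) * s^d) * Q ^ (s - 1))" by (simp add: s_def)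
  also have "\<dots> = Q * Q ^ (s - 1)" unfolding Q_def by (simp only: mult.assoc)
  also have "\<dots> = Q ^ s" using s1 by (cases s) auto
  finally show ?case unfolding Q_def s_def .
qed

lemma arithA:
  fixes k :: nat assumes "k \<ge> 2"
  shows "2*k^2 * 4^k * (2*k^2)^k \<le> k^(8*k)"
proof -
  have k2: "2*k^2 \<le> k^3" using assms by (simp add: power2_eq_square power3_eq_cube)
  have k4: "(4::nat) \<le> k^2" using power_mono[OF assms, of 2] by simp
  have "2*k^2 * 4^k * (2*k^2)^k \<le> k^3 * (k^2)^k * (k^3)^k"
    by (intro mult_mono power_mono k2 k4) auto
  also have "\<dots> = k^(3 + 5*k)" by (simp add: power_mult[symmetric] power_add[symmetric] algebra_simps)
  also have "\<dots> \<le> k^(8*k)" using assms by (intro power_increasing) auto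
  finally show ?thesis .
qed

lemma arithB:
  fixes k d :: nat assumes "k \<ge> d + 2"
  shows "(k * (d+1) * k^d)^k \<le> k^((d+2)*k)"
proof -
  have "(k * (d+1) * k^d)^k \<le> (k * k * k^d)^k"
    using assms by (intro power_mono mult_mono) auto
  also have "\<dots> = k^((d+2)*k)" by (simp add: power_mult[symmetric] power_add[symmetric] algebra_simps)
  finally show ?thesis .
qed

lemma arithC:
  fixes k d a b :: nat assumes "k \<ge> d + 2" "a \<le> k^(8*k)" "b \<le> k^((d+2)*k)"
  shows "a + b \<le> k^((d+9)*k)"
proof -
  have k1: "1 \<le> k" using assms by simp
  have p1: "k^(8*k) \<le> k^((d+8)*k)" by (rule power_increasing) (use k1 in auto)
  have p2: "k^((d+2)*k) \<le> k^((d+8)*k)" by (rule power_increasing) (use k1 in \<open>auto simp: algebra_simps\<close>)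
  have "a \<le> k^((d+8)*k)" using assms(2) p1 by (rule le_trans)
  moreover have "b \<le> k^((d+8)*k)" using assms(3) p2 by (rule le_trans)
  ultimately have "a + b \<le> 2 * k^((d+8)*k)" by simp
  also have "\<dots> \<le> k^k * k^((d+8)*k)" 
  proof (rule mult_right_mono)
    have "2 \<le> k" using assms by simp
    also have "\<dots> \<le> k^k" using k1 by (metis power_increasing power_one_right)
    finally show "2 \<le> k^k" .
  qed simp
  also have "\<dots> = k^((d+9)*k)" by (simp add: power_add[symmetric] algebra_simps)
  finally show ?thesis .
qed

lemma pow_to_powr:
  fixes k m :: nat assumes "k \<ge> 1"
  shows "real (k^m) = 2 powr (real m * log 2 (real k))"
proof -
  have "real (k^m) = real k powr real m" using assms by (simp add: powr_realpow)
  also have "\<dots> = (2 powr log 2 (real k)) powr real m" using assms by simp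
  also have "\<dots> = 2 powr (real m * log 2 (real k))" by (simp add: powr_powr mult.commute)
  finally show ?thesis .
qed

definition Gk :: "nat \<Rightarrow> nat set set \<Rightarrow> (nat \<Rightarrow> nat) \<Rightarrow> nat set set" where
  "Gk k E f = {{u,v}|u v. u\<in>{1..k} \<and> v\<in>{1..k} \<and> u\<noteq>v \<and> {f u, f v}\<in>E}"

definition Ak :: "(nat \<Rightarrow> nat set set set) \<Rightarrow> nat \<Rightarrow> nat set set set" where
  "Ak M k = (\<Union>n\<in>{..<2*k^2}. \<Union>E\<in>M n. Gk k E ` (\<Pi>\<^sub>E i\<in>{1..k}. {1..n}))"

lemma Ak_card:
  assumes fin: "\<And>n. finite (M n)" and bnd: "\<And>n. n < 2*k^2 \<Longrightarrow> card (M n) \<le> 4^k"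
  shows "card (Ak M k) \<le> 2*k^2 * 4^k * (2*k^2)^k"
proof -
  have "card (Ak M k) \<le> (\<Sum>n\<in>{..<2*k^2}. card (\<Union>E\<in>M n. Gk k E ` (\<Pi>\<^sub>E i\<in>{1..k}. {1..n})))"
    unfolding Ak_def by (rule card_UN_le) simp
  also have "\<dots> \<le> (\<Sum>n\<in>{..<2*k^2}. 4^k * (2*k^2)^k)"
  proof (rule sum_mono)
    fix n assume n: "n \<in> {..<2*k^2}"
    have "card (\<Union>E\<in>M n. Gk k E ` (\<Pi>\<^sub>E i\<in>{1..k}. {1..n})) \<le> (\<Sum>E\<in>M n. card (Gk k E ` (\<Pi>\<^sub>E i\<in>{1..k}. {1..n})))"
      by (rule card_UN_le[OF fin])
    also have "\<dots> \<le> (\<Sum>E\<in>M n. card (\<Pi>\<^sub>E i\<in>{1..k}. {1..n}))"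
      by (rule sum_mono, rule card_image_le) (simp add: finite_PiE)
    also have "\<dots> = card (M n) * n^k" by (simp add: card_PiE)
    also have "\<dots> \<le> 4^k * (2*k^2)^k"
      using n bnd[of n] by (intro mult_mono power_mono) auto
    finally show "card (\<Union>E\<in>M n. Gk k E ` (\<Pi>\<^sub>E i\<in>{1..k}. {1..n})) \<le> 4^k * (2*k^2)^k" .
  qed
  also have "\<dots> = 2*k^2 * 4^k * (2*k^2)^k" by simp
  finally show ?thesis .
qed

lemma finite_Ak: "(\<And>n. finite (M n)) \<Longrightarrow> finite (Ak M k)"
  unfolding Ak_def by (intro finite_UN_I finite_imageI) (auto simp: finite_PiE)

lemma sing_not_edge: "is_graph_on k F \<Longrightarrow> {v} \<notin> F"
  unfolding is_graph_on_def by (auto simp: doubleton_eq_iff)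

lemma key:
  fixes \<delta> :: real and M :: "nat \<Rightarrow> nat set set set"
  assumes dpos: "0 < \<delta>"
    and good: "\<And>n. even n \<Longrightarrow> M n \<subseteq> good_graphs (1/2 + \<delta>/2) (1/2) (8 / \<delta>) n"
    and odd: "\<And>n. odd n \<Longrightarrow> M n = {}"
    and F: "(k, F) \<in> hereditary_closure (\<Union>n. {(n, E) | E. E \<in> M n})"
  shows "F \<in> Ak M k \<union> dgr (nat \<lceil>8/\<delta>\<rceil>) {1..k}"
proof -
  from F have gF: "is_graph_on k F" unfolding hereditary_closure_def by auto
  from F obtain n E f where E: "E \<in> M n" and inj: "inj_on f {1..k}" and fim: "f ` {1..k} \<subseteq> {1..n}"
    and iff: "\<forall>u\<in>{1..k}. \<forall>v\<in>{1..k}. u \<noteq> v \<longrightarrow> ({f u, f v} \<in> E \<longleftrightarrow> {u, v} \<in> F)"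
    unfolding hereditary_closure_def by auto
  show ?thesis
  proof (cases "n < 2*k^2")
    case True
    have "F = Gk k E (restrict f {1..k})"
    proof
      show "F \<subseteq> Gk k E (restrict f {1..k})"
      proof
        fix e assume e: "e \<in> F"
        then obtain u v where uv: "e = {u,v}" "u\<in>{1..k}" "v\<in>{1..k}" "u\<noteq>v"
          using gF unfolding is_graph_on_def by blast
        then have "{f u, f v} \<in> E" using iff e by blast
        then show "e \<in> Gk k E (restrict f {1..k})" unfolding Gk_def using uv by auto
      qed
      show "Gk k E (restrict f {1..k}) \<subseteq> F" unfolding Gk_def using iff by auto
    qed
    moreover have "restrict f {1..k} \<in> (\<Pi>\<^sub>E i\<in>{1..k}. {1..n})" using fim by auto
    ultimately have "F \<in> Ak M k" unfolding Ak_def using True E by blast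
    then show ?thesis by blast
  next
    case False
    have "even n" using E odd by (cases "even n") auto
    then have gg: "good_graph (1/2 + \<delta>/2) (1/2) (8 / \<delta>) n E" using good E by (auto simp: good_graphs_def)
    then have gS: "\<forall>S \<subseteq> {1..n}. S \<noteq> {} \<and> real (card S) \<le> (real n / 2) powr (1/2) \<longrightarrow>
        (\<exists>v\<in>S. real (card {u\<in>S. {u, v} \<in> E}) < 8/\<delta>)" unfolding good_graph_def by blast
    have kle: "real k \<le> (real n / 2) powr (1/2)"
    proof -
      have "2*k^2 \<le> n" using False by simp
      then have "real (2*k^2) \<le> real n" by (simp only: of_nat_le_iff)
      then have "real k ^ 2 \<le> real n / 2" by simp
      then have "real k \<le> sqrt (real n / 2)" by (rule real_le_rsqrt)
      then show ?thesis by (simp add: powr_half_sqrt)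
    qed
    have "F \<in> dgr (nat \<lceil>8/\<delta>\<rceil>) {1..k}"
      unfolding dgr_def
    proof (intro CollectI conjI allI impI)
      show "F \<subseteq> edges_on {1..k}" using gF unfolding is_graph_on_def edges_on_def .
      fix T assume T: "T \<subseteq> {1..k}" "T \<noteq> {}"
      have injT: "inj_on f T" using inj T(1) by (rule inj_on_subset)
      have "card (f ` T) = card T" using injT by (rule card_image)
      also have "\<dots> \<le> k" using card_mono[OF _ T(1)] by simp
      finally have "real (card (f ` T)) \<le> (real n / 2) powr (1/2)" using kle by linarith
      moreover have "f ` T \<subseteq> {1..n}" using fim T(1) by blast
      ultimately obtain w where w: "w \<in> f ` T" "real (card {u\<in>f ` T. {u, w} \<in> E}) < 8/\<delta>"
        using gS T(2) by blast
      then obtain v where v: "v \<in> T" "w = f v" by blast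
      have "card {u\<in>T. {u,v}\<in>F} \<le> card {u\<in>f ` T. {u, w} \<in> E}"
      proof (rule card_inj_on_le)
        show "inj_on f {u\<in>T. {u,v}\<in>F}" using injT by (rule inj_on_subset) blast
        show "f ` {u\<in>T. {u,v}\<in>F} \<subseteq> {u\<in>f ` T. {u, w} \<in> E}"
        proof
          fix x assume "x \<in> f ` {u\<in>T. {u,v}\<in>F}"
          then obtain u where u: "u \<in> T" "{u,v}\<in>F" "x = f u" by blast
          have "u \<noteq> v" using u(2) sing_not_edge[OF gF, of v] by auto
          then have "{f u, f v} \<in> E" using iff u T(1) v(1) by blast
          then show "x \<in> {u\<in>f ` T. {u, w} \<in> E}" using u v by auto
        qed
        show "finite {u\<in>f ` T. {u, w} \<in> E}" using finite_subset[OF T(1)] by simp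
      qed
      then have "real (card {u\<in>T. {u,v}\<in>F}) < real (nat \<lceil>8/\<delta>\<rceil>) + 1"
        using w(2) real_nat_ceiling_ge[of "8/\<delta>"] by linarith
      then have "card {u\<in>T. {u,v}\<in>F} \<le> nat \<lceil>8/\<delta>\<rceil>" by linarith
      then show "\<exists>v\<in>T. card {u\<in>T. {u,v}\<in>F} \<le> nat \<lceil>8/\<delta>\<rceil>" using v(1) by blast
    qed
    then show ?thesis by blast
  qed
qed

theorem claim3p1:
  fixes \<delta> :: real and M :: "nat \<Rightarrow> nat set set set"
  assumes "0 < \<delta>" and "\<delta> < 1"
    and "\<And>n. even n \<Longrightarrow> M n \<subseteq> good_graphs (1/2 + \<delta>/2) (1/2) (8 / \<delta>) n"
    and "\<And>n. even n \<Longrightarrow> real (card (M n)) \<le> 2 powr sqrt (real n)"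
    and "\<And>n. odd n \<Longrightarrow> M n = {}"
  shows "at_most_factorial_speed (hereditary_closure (\<Union>n. {(n, E) | E. E \<in> M n}))"
proof -
  define d where "d = nat \<lceil>8/\<delta>\<rceil>"
  define H where "H = hereditary_closure (\<Union>n. {(n, E) | E. E \<in> M n})"
  have finM: "finite (M n)" for n
  proof (cases "even n")
    case True
    have "M n \<subseteq> Pow (Pow {1..n})"
    proof
      fix E assume "E \<in> M n"
      then have "good_graph (1/2 + \<delta>/2) (1/2) (8 / \<delta>) n E" using assms(3)[OF True] by (auto simp: good_graphs_def)
      then have "is_graph_on n E" by (simp add: good_graph_def)
      then show "E \<in> Pow (Pow {1..n})" unfolding is_graph_on_def by auto
    qed
    then show ?thesis by (rule finite_subset) simp
  next
    case False then show ?thesis using assms(5) by simp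
  qed
  have bnd: "card (M n) \<le> 4^k" if n: "n < 2*k^2" for n k
  proof (cases "even n")
    case True
    have "sqrt (real n) \<le> real (2*k)"
    proof (rule real_le_lsqrt)
      have "n \<le> (2*k)^2" using n by (simp add: power2_eq_square)
      then show "real n \<le> (real (2*k))^2" by (metis of_nat_le_iff of_nat_power)
    qed simp
    then have "real (card (M n)) \<le> 2 powr real (2*k)" using assms(4)[OF True] by (meson order_trans powr_mono one_le_numeral)
    also have "\<dots> = 2^(2*k)" by (rule powr_realpow) simp
    also have "\<dots> = real (4^k)" by (simp add: power_mult)
    finally show ?thesis by (simp only: of_nat_le_iff)
  next
    case False then show ?thesis using assms(5) by simp
  qed
  have main: "card {F. (k, F) \<in> H} \<le> k^((d+9)*k)" if k: "k \<ge> d + 2" for k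
  proof -
    have sub: "{F. (k, F) \<in> H} \<subseteq> Ak M k \<union> dgr d {1..k}"
      using key[OF assms(1) assms(3) assms(5)] unfolding H_def d_def by blast
    have "card {F. (k, F) \<in> H} \<le> card (Ak M k \<union> dgr d {1..k})"
      by (rule card_mono[OF _ sub]) (simp add: finite_Ak finM finite_dgr)
    also have "\<dots> \<le> card (Ak M k) + card (dgr d {1..k})" by (rule card_Un_le)
    also have "\<dots> \<le> k^((d+9)*k)"
    proof (rule arithC[OF k])
      have "card (Ak M k) \<le> 2*k^2 * 4^k * (2*k^2)^k" by (rule Ak_card[OF finM bnd])
      also have "\<dots> \<le> k^(8*k)" using k by (intro arithA) simp
      finally show "card (Ak M k) \<le> k^(8*k)" .
      have "card (dgr d {1..k}) \<le> (k * (d+1) * k^d)^k" using dgr_card[of "{1..k}" d] by simp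
      also have "\<dots> \<le> k^((d+2)*k)" using k by (rule arithB)
      finally show "card (dgr d {1..k}) \<le> k^((d+2)*k)" .
    qed
    finally show ?thesis .
  qed
  show ?thesis
    unfolding at_most_factorial_speed_def H_def[symmetric]
  proof (intro exI allI impI)
    fix k assume k: "d + 2 \<le> k"
    have "real (card {F. (k, F) \<in> H}) \<le> real (k^((d+9)*k))" using main[OF k] by (simp only: of_nat_le_iff)
    also have "\<dots> = 2 powr (real ((d+9)*k) * log 2 (real k))" using k by (intro pow_to_powr) simp
    also have "\<dots> = 2 powr (real (d+9) * real k * log 2 (real k))" by simp
    finally show "real (card {F. (k, F) \<in> H}) \<le> 2 powr (real (d+9) * real k * log 2 (real k))" .
  qed
qed

end
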